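(* Let $f$ be a convex function on $\mathbb{R}^m$ and let $C,C'\subset\mathbb{R}^m$ be open convex sets such that $f|_C$ and $f|_{C'}$ are affine. Suppose $v\in\operatorname{recc}(C)\cap\operatorname{recc}(C')$. Then $\nabla_vf(x)=\nabla_vf(x')$ for all $x\in C$, $x'\in C'$, where $\nabla_v$ denotes the directional derivative in direction $v$.
   Context: $\operatorname{recc}(S)=\{v\in\mathbb{R}^m:\forall x\in S,\ x+v\in S\}$ is the recession cone of a convex set $S$. *)

theory Defs
  imports "HOL-Analysis.Analysis"
begin

definition recc :: "'a::real_vector set \<Rightarrow> 'a set" where
  "recc S = {v. \<forall>x\<in>S. x + v \<in> S}"

definition affine_on :: "'a::real_vector set \<Rightarrow> ('a \<Rightarrow> real) \<Rightarrow> bool" where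
  "affine_on S f \<longleftrightarrow> (\<exists>l c. linear l \<and> (\<forall>x\<in>S. f x = l x + c))"

definition has_dir_deriv :: "('a::real_vector \<Rightarrow> real) \<Rightarrow> 'a \<Rightarrow> 'a \<Rightarrow> real \<Rightarrow> bool" where
  "has_dir_deriv f x v D \<longleftrightarrow> ((\<lambda>t. (f (x + t *\<^sub>R v) - f x) / t) \<longlongrightarrow> D) (at_right 0)"

end

theory Submission
  imports Defs
begin

lemma ray_nat:
  assumes "x \<in> C" "v \<in> recc C"
  shows "x + real n *\<^sub>R v \<in> C"
proof (induction n)
  case 0 then show ?case using assms by simp
next
  case (Suc n)
  have "x + real (Suc n) *\<^sub>R v = (x + real n *\<^sub>R v) + v" by (simp add: algebra_simps)
  moreover have "(x + real n *\<^sub>R v) + v \<in> C" using Suc assms(2) by (simp add: recc_def)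
  ultimately show ?case by (simp add: add.assoc)
qed

lemma ray01:
  assumes "convex C" "x \<in> C" "v \<in> recc C" "0 \<le> t" "t \<le> 1"
  shows "x + t *\<^sub>R v \<in> C"
proof -
  have xv: "x + v \<in> C" using assms(2,3) by (simp add: recc_def)
  have "(1 - t) *\<^sub>R x + t *\<^sub>R (x + v) \<in> C"
    using assms(1) xv assms(2,4,5) unfolding convex_def by auto
  moreover have "(1 - t) *\<^sub>R x + t *\<^sub>R (x + v) = x + t *\<^sub>R v" by (simp add: algebra_simps)
  ultimately show ?thesis by simp
qed

lemma aff_slope:
  assumes "linear l" "\<forall>y\<in>C. f y = l y + c" "x \<in> C" "x + t *\<^sub>R v \<in> C"
  shows "f (x + t *\<^sub>R v) = f x + t * l v"
proof -
  have "l (x + t *\<^sub>R v) = l x + t * l v"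
    using assms(1) by (simp add: linear_add linear_scale)
  then show ?thesis using assms(2,3,4) by simp
qed

lemma dir_deriv_aff:
  assumes "convex C" "linear l" "\<forall>y\<in>C. f y = l y + c" "x \<in> C" "v \<in> recc C"
  shows "has_dir_deriv f x v (l v)"
proof -
  have ev: "\<forall>\<^sub>F t in at_right 0. t \<in> {0<..<1::real}"
    by (rule eventually_at_right_real) simp
  have "\<forall>\<^sub>F t in at_right 0. l v = (f (x + t *\<^sub>R v) - f x) / t"
  proof (rule eventually_mono[OF ev])
    fix t :: real assume t: "t \<in> {0<..<1}"
    have "x + t *\<^sub>R v \<in> C" using ray01[OF assms(1,4,5)] t by auto
    then have "f (x + t *\<^sub>R v) = f x + t * l v" using aff_slope[OF assms(2,3,4)] by blast
    then show "l v = (f (x + t *\<^sub>R v) - f x) / t" using t by simp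
  qed
  then show ?thesis unfolding has_dir_deriv_def
    by (rule Lim_transform_eventually[OF tendsto_const])
qed

lemma slope_le:
  fixes f :: "'a::real_vector \<Rightarrow> real"
  assumes cf: "convex_on UNIV f"
    and ray1: "\<And>n::nat. f (x + real n *\<^sub>R v) = f x + real n * a"
    and ray2: "\<And>n::nat. f (x' + real n *\<^sub>R v) = f x' + real n * b"
  shows "b \<le> a"
proof (rule ccontr)
  assume "\<not> b \<le> a"
  then have ba: "b - a > 0" by simp
  define K where "K = (1/2) * f x + (1/2) * f (2 *\<^sub>R x' - x) - f x'"
  have key: "real n * (b - a) \<le> K" for n :: nat
  proof -
    have eq: "(1 - 1/2) *\<^sub>R (2 *\<^sub>R x' - x) + (1/2::real) *\<^sub>R (x + real (2*n) *\<^sub>R v)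
        = x' + real n *\<^sub>R v"
      by (simp add: algebra_simps)
    have "f ((1 - 1/2) *\<^sub>R (2 *\<^sub>R x' - x) + (1/2::real) *\<^sub>R (x + real (2*n) *\<^sub>R v))
        \<le> (1 - 1/2) * f (2 *\<^sub>R x' - x) + (1/2) * f (x + real (2*n) *\<^sub>R v)"
      by (rule convex_onD[OF cf]) auto
    then have "f x' + real n * b \<le> (1/2) * f (2 *\<^sub>R x' - x) + (1/2) * (f x + real (2*n) * a)"
      unfolding eq ray1 ray2 by simp
    then show ?thesis unfolding K_def by (simp add: algebra_simps)
  qed
  obtain n :: nat where n: "K / (b - a) < real n" using reals_Archimedean2 by blast
  then have "K < real n * (b - a)" using ba by (simp add: field_simps)
  with key[of n] show False by simp
qed

theorem mainTheorem16:
  fixes f :: "real ^ 'm \<Rightarrow> real" and C C' :: "(real ^ 'm) set" and v :: "real ^ 'm"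
  assumes "convex_on UNIV f"
    and "open C" and "convex C" and "open C'" and "convex C'"
    and "affine_on C f" and "affine_on C' f"
    and "v \<in> recc C \<inter> recc C'"
  shows "\<forall>x\<in>C. \<forall>x'\<in>C'. \<exists>D. has_dir_deriv f x v D \<and> has_dir_deriv f x' v D"
proof (intro ballI)
  fix x x' assume x: "x \<in> C" and x': "x' \<in> C'"
  obtain l c where l: "linear l" "\<forall>y\<in>C. f y = l y + c" using assms(6) unfolding affine_on_def by blast
  obtain l' c' where l': "linear l'" "\<forall>y\<in>C'. f y = l' y + c'" using assms(7) unfolding affine_on_def by blast
  have v: "v \<in> recc C" "v \<in> recc C'" using assms(8) by auto
  have r1: "f (x + real n *\<^sub>R v) = f x + real n * l v" for n :: nat
    by (rule aff_slope[OF l x ray_nat[OF x v(1)]])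
  have r2: "f (x' + real n *\<^sub>R v) = f x' + real n * l' v" for n :: nat
    by (rule aff_slope[OF l' x' ray_nat[OF x' v(2)]])
  have "l' v \<le> l v" by (rule slope_le[OF assms(1) r1 r2])
  moreover have "l v \<le> l' v" by (rule slope_le[OF assms(1) r2 r1])
  ultimately have eq: "l v = l' v" by simp
  show "\<exists>D. has_dir_deriv f x v D \<and> has_dir_deriv f x' v D"
    using dir_deriv_aff[OF assms(3) l x v(1)] dir_deriv_aff[OF assms(5) l' x' v(2)] eq by metis
qed

end
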